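(* Let $\langle A,\preccurlyeq\rangle$ be a pre-ordered set, and consider the condition ( * ) for every $a\in A$ there is $b\in A$ with $b\prec a$. (i) If $\preccurlyeq$ satisfies ( * ), then $LO(A,\preccurlyeq)$ contains no minimal sets; consequently every $pr(a)$, $a\in A$, is infinite, and every set in $LO(A,\preccurlyeq)$ is infinite. (ii) Conversely, if ( * ) fails, then $LO(A,\preccurlyeq)$ contains a minimal set.
   Context: A pre-ordering $\preccurlyeq$ on $A$ is a reflexive and transitive binary relation; $b\prec a$ means $b\preccurlyeq a$ and not $a\preccurlyeq b$. For $a\in A$, $pr(a)=\{b\in A: b\preccurlyeq a\}$. $LO(A,\preccurlyeq)$ is the set of all nonempty subsets $x\subseteq A$ such that $pr(c)\subseteq x$ for every $c\in x$. A set $x\in LO(A,\preccurlyeq)$ is minimal if there is no $y\in LO(A,\preccurlyeq)$ with $y\subsetneq x$. *)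

theory Defs
  imports Main
begin

text \<open>A pre-ordered set is a carrier A with a relation r (a set of pairs), where
  (b, a) \<in> r means b \<preccurlyeq> a.  We use the library notion preorder_on A r.\<close>

definition strictly_below :: "('a \<times> 'a) set \<Rightarrow> 'a \<Rightarrow> 'a \<Rightarrow> bool" where
  "strictly_below r b a \<longleftrightarrow> (b, a) \<in> r \<and> (a, b) \<notin> r"

definition pr :: "'a set \<Rightarrow> ('a \<times> 'a) set \<Rightarrow> 'a \<Rightarrow> 'a set" where
  "pr A r a = {b \<in> A. (b, a) \<in> r}"

definition LO :: "'a set \<Rightarrow> ('a \<times> 'a) set \<Rightarrow> 'a set set" where
  "LO A r = {x. x \<noteq> {} \<and> x \<subseteq> A \<and> (\<forall>c\<in>x. pr A r c \<subseteq> x)}"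

definition minimal_LO :: "'a set \<Rightarrow> ('a \<times> 'a) set \<Rightarrow> 'a set \<Rightarrow> bool" where
  "minimal_LO A r x \<longleftrightarrow> x \<in> LO A r \<and> \<not> (\<exists>y \<in> LO A r. y \<subset> x)"

end

theory Submission
  imports Defs
begin

lemma pr_LO:
  assumes "preorder_on A r" "a \<in> A"
  shows "pr A r a \<in> LO A r"
proof -
  have "refl_on A r" "trans r" using assms(1) unfolding preorder_on_def by auto
  then show ?thesis using assms(2) unfolding LO_def pr_def
    by (auto dest: refl_onD elim: transE)
qed

lemma finite_LO_min:
  assumes "x \<in> LO A r" "finite x"
  shows "\<exists>y. minimal_LO A r y"
proof -
  have "\<exists>n y. y \<in> LO A r \<and> y \<subseteq> x \<and> card y = n" using assms(1) by blast
  then obtain n where n: "\<exists>y. y \<in> LO A r \<and> y \<subseteq> x \<and> card y = n"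
    and least: "\<And>m. (\<exists>y. y \<in> LO A r \<and> y \<subseteq> x \<and> card y = m) \<Longrightarrow> n \<le> m"
    using ex_least_nat_le[where P="\<lambda>n. \<exists>y. y \<in> LO A r \<and> y \<subseteq> x \<and> card y = n"]
    by (metis exists_least_iff not_le)
  then obtain y where y: "y \<in> LO A r" "y \<subseteq> x" "card y = n" by blast
  have "minimal_LO A r y"
    unfolding minimal_LO_def
  proof (intro conjI y(1) notI)
    assume "\<exists>z\<in>LO A r. z \<subset> y"
    then obtain z where z: "z \<in> LO A r" "z \<subset> y" by blast
    have "finite y" using y(2) assms(2) finite_subset by blast
    then have "card z < card y" using z(2) psubset_card_mono by blast
    moreover have "n \<le> card z" using least[of "card z"] z y(2) by blast
    ultimately show False using y(3) by simp
  qed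
  then show ?thesis by blast
qed

theorem proposition2p4:
  fixes A :: "'a set" and r :: "('a \<times> 'a) set"
  assumes "preorder_on A r"
  shows "((\<forall>a\<in>A. \<exists>b\<in>A. strictly_below r b a) \<longrightarrow>
            (\<not> (\<exists>x. minimal_LO A r x))
            \<and> (\<forall>a\<in>A. infinite (pr A r a))
            \<and> (\<forall>x\<in>LO A r. infinite x))
       \<and> (\<not> (\<forall>a\<in>A. \<exists>b\<in>A. strictly_below r b a) \<longrightarrow> (\<exists>x. minimal_LO A r x))"
proof -
  have tr: "trans r" and rf: "refl_on A r" using assms unfolding preorder_on_def by auto
  have part1: "\<not> (\<exists>x. minimal_LO A r x)" if H: "\<forall>a\<in>A. \<exists>b\<in>A. strictly_below r b a"
  proof
    assume "\<exists>x. minimal_LO A r x"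
    then obtain x where x: "x \<in> LO A r" "\<not> (\<exists>y \<in> LO A r. y \<subset> x)"
      unfolding minimal_LO_def by blast
    then obtain c where c: "c \<in> x" "x \<subseteq> A" "pr A r c \<subseteq> x" unfolding LO_def by blast
    then obtain b where b: "b \<in> A" "strictly_below r b c" using H by blast
    have "pr A r b \<subseteq> pr A r c" using b tr unfolding pr_def strictly_below_def
      by (auto elim: transE)
    moreover have "c \<notin> pr A r b" using b unfolding pr_def strictly_below_def by auto
    ultimately have "pr A r b \<subset> x" using c by blast
    moreover have "pr A r b \<in> LO A r" using pr_LO[OF assms b(1)] .
    ultimately show False using x(2) by blast
  qed
  have part2: "\<exists>x. minimal_LO A r x" if H: "\<not> (\<forall>a\<in>A. \<exists>b\<in>A. strictly_below r b a)"
  proof -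
    obtain a where a: "a \<in> A" "\<forall>b\<in>A. \<not> strictly_below r b a" using H by blast
    have "minimal_LO A r (pr A r a)"
      unfolding minimal_LO_def
    proof (intro conjI pr_LO[OF assms a(1)] notI)
      assume "\<exists>y\<in>LO A r. y \<subset> pr A r a"
      then obtain y where y: "y \<in> LO A r" "y \<subset> pr A r a" by blast
      then obtain d where d: "d \<in> y" "pr A r d \<subseteq> y" unfolding LO_def by blast
      have "d \<in> A" "(d, a) \<in> r" using d y unfolding pr_def by auto
      then have "(a, d) \<in> r" using a unfolding strictly_below_def by auto
      then have "pr A r a \<subseteq> pr A r d" using tr unfolding pr_def by (auto elim: transE)
      then show False using d y by blast
    qed
    then show ?thesis by blast
  qed
  show ?thesis
  proof (intro conjI impI)
    assume H: "\<forall>a\<in>A. \<exists>b\<in>A. strictly_below r b a"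
    show "\<not> (\<exists>x. minimal_LO A r x)" using part1[OF H] .
    show inf: "\<forall>x\<in>LO A r. infinite x" using part1[OF H] finite_LO_min by blast
    show "\<forall>a\<in>A. infinite (pr A r a)" using inf pr_LO[OF assms] by blast
  next
    assume "\<not> (\<forall>a\<in>A. \<exists>b\<in>A. strictly_below r b a)"
    then show "\<exists>x. minimal_LO A r x" using part2 by blast
  qed
qed

end
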